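(* Let $$E=(\{0\}\times[0,1])\cup\bigcup_{n=1}^\infty\Big(\big(\{\tfrac1n\}\times[0,1]\big)\cup\big([\tfrac{1}{2n},\tfrac{1}{2n-1}]\times\{1\}\big)\cup\big([\tfrac{1}{2n+1},\tfrac{1}{2n}]\times\{0\}\big)\Big)\subseteq[0,1]^2.$$ Then $E$ is a connected closed subset of $[0,1]^2$ which is neither arcwise connected nor locally connected, and $E$ is a $B_1$-retract of $[0,1]^2$.
   Context: A function $f:X\to Y$ between topological spaces is a Baire-one function if it is the pointwise limit of a sequence of continuous functions $f_n:X\to Y$. A subset $E$ of $X$ (with the subspace topology) is a $B_1$-retract of $X$ if there exists a Baire-one function $r:X\to E$ with $r(x)=x$ for all $x\in E$. *)

theory Defs
  imports "HOL-Analysis.Analysis"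
begin

definition baire_one_map :: "'a topology \<Rightarrow> 'b topology \<Rightarrow> ('a \<Rightarrow> 'b) \<Rightarrow> bool" where
  "baire_one_map X Y f \<longleftrightarrow>
     (\<exists>g :: nat \<Rightarrow> 'a \<Rightarrow> 'b. (\<forall>n. continuous_map X Y (g n)) \<and>
        (\<forall>x\<in>topspace X. limitin Y (\<lambda>n. g n x) (f x) sequentially))"

definition B1_retract :: "'a set \<Rightarrow> 'a topology \<Rightarrow> bool" where
  "B1_retract E X \<longleftrightarrow> E \<subseteq> topspace X \<and>
     (\<exists>r. baire_one_map X (subtopology X E) r \<and> (\<forall>x\<in>E. r x = x))"

definition arcwise_connected :: "'a::topological_space set \<Rightarrow> bool" where
  "arcwise_connected S \<longleftrightarrow>
     (\<forall>x\<in>S. \<forall>y\<in>S. x \<noteq> y \<longrightarrow>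
        (\<exists>g. arc g \<and> path_image g \<subseteq> S \<and> pathstart g = x \<and> pathfinish g = y))"

definition E_set :: "(real \<times> real) set" where
  "E_set = ({0} \<times> {0..1}) \<union>
     (\<Union>n\<in>{1::nat..}. ({1 / real n} \<times> {0..1})
        \<union> ({1 / (2 * real n) .. 1 / (2 * real n - 1)} \<times> {1})
        \<union> ({1 / (2 * real n + 1) .. 1 / (2 * real n)} \<times> {0}))"

end

theory Submission
  imports Defs
begin


definition hk :: "nat \<Rightarrow> real" where "hk k = (if odd k then 1 else 0)"
definition UU :: "nat \<Rightarrow> (real \<times> real) set" where
  "UU k = ({1/real k} \<times> {0..1}) \<union> ({1/real (k+1) .. 1/real k} \<times> {hk k}) \<union> ({1/real (k+1)} \<times> {0..1})"

lemma E_eq: "E_set = ({0} \<times> {0..1}) \<union> (\<Union>k\<in>{1..}. UU k)"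
proof
  show "E_set \<subseteq> ({0} \<times> {0..1}) \<union> (\<Union>k\<in>{1..}. UU k)"
  proof
    fix p assume "p \<in> E_set"
    then consider "p \<in> {0} \<times> {0..1}"
      | n where "n \<ge> 1" "p \<in> {1 / real n} \<times> {0..1}"
      | n where "n \<ge> 1" "p \<in> {1 / (2 * real n) .. 1 / (2 * real n - 1)} \<times> {1}"
      | n where "n \<ge> 1" "p \<in> {1 / (2 * real n + 1) .. 1 / (2 * real n)} \<times> {0}"
      unfolding E_set_def by auto
    then show "p \<in> ({0} \<times> {0..1}) \<union> (\<Union>k\<in>{1..}. UU k)"
    proof cases
      case 1 then show ?thesis by auto
    next
      case (2 n) then show ?thesis unfolding UU_def by force
    next
      case (3 n)
      have "odd (2*n-1)" using 3 by presburger
      moreover have "real (2*n-1) = 2 * real n - 1" "real (2*n-1+1) = 2 * real n" using 3 by auto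
      ultimately have "p \<in> UU (2*n-1)" using 3 unfolding UU_def hk_def by auto
      moreover have "2*n-1 \<in> {1..}" using 3 by auto
      ultimately show ?thesis by blast
    next
      case (4 n)
      have "even (2*n)" by presburger
      moreover have "real (2*n) = 2 * real n" "real (2*n+1) = 2 * real n + 1" by auto
      ultimately have "p \<in> UU (2*n)" using 4 unfolding UU_def hk_def by (auto simp: add.commute)
      moreover have "2*n \<in> {1..}" using 4 by auto
      ultimately show ?thesis by blast
    qed
  qed
next
  show "({0} \<times> {0..1}) \<union> (\<Union>k\<in>{1..}. UU k) \<subseteq> E_set"
  proof
    fix p assume "p \<in> ({0} \<times> {0..1}) \<union> (\<Union>k\<in>{1..}. UU k)"
    then consider "p \<in> {0} \<times> {0..1}"
      | k where "k \<ge> 1" "p \<in> {1/real k} \<times> {0..1}"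
      | k where "k \<ge> 1" "p \<in> {1/real (k+1)} \<times> {0..1}"
      | k where "k \<ge> 1" "p \<in> {1/real (k+1) .. 1/real k} \<times> {hk k}"
      unfolding UU_def by auto
    then show "p \<in> E_set"
    proof cases
      case 1 then show ?thesis unfolding E_set_def by auto
    next
      case (2 k) then show ?thesis unfolding E_set_def by force
    next
      case (3 k)
      then have "k+1 \<in> {1::nat..}" by auto
      with 3 show ?thesis unfolding E_set_def by force
    next
      case (4 k)
      show ?thesis
      proof (cases "odd k")
        case True
        define n where "n = (k+1) div 2"
        have n: "k = 2*n-1" "n \<ge> 1" using 4 True unfolding n_def by presburger+
        have e: "2 * real n - 1 = real k" "2 * real n = real (k+1)" using n by auto
        have "p \<in> {1 / (2 * real n) .. 1 / (2 * real n - 1)} \<times> {1}" unfolding e using 4 True unfolding hk_def by auto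
        then show ?thesis unfolding E_set_def using n by blast
      next
        case False
        define n where "n = k div 2"
        have n: "k = 2*n" "n \<ge> 1" using 4 False unfolding n_def by presburger+
        have e: "2 * real n = real k" "2 * real n + 1 = real (k+1)" using n by auto
        have "p \<in> {1 / (2 * real n + 1) .. 1 / (2 * real n)} \<times> {0}" unfolding e using 4 False unfolding hk_def by (auto simp: add.commute)
        then show ?thesis unfolding E_set_def using n by blast
      qed
    qed
  qed
qed



definition Mx :: "real \<Rightarrow> real \<Rightarrow> real" where "Mx X Y = max \<bar>X\<bar> ((Y+1)/2)"
definition R0x :: "real \<Rightarrow> real \<Rightarrow> real" where "R0x X Y = X / Mx X Y"
definition R0y :: "real \<Rightarrow> real \<Rightarrow> real" where "R0y X Y = (Y+1) / Mx X Y - 1"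

lemma R0_id:
  assumes "\<bar>X\<bar> = 1 \<or> Y = 1" "\<bar>X\<bar> \<le> 1" "0 \<le> Y" "Y \<le> 1"
  shows "R0x X Y = X" "R0y X Y = Y"
proof -
  have "Mx X Y = 1" using assms unfolding Mx_def by (auto simp: max_def)
  then show "R0x X Y = X" "R0y X Y = Y" unfolding R0x_def R0y_def by auto
qed

lemma R0_img:
  assumes "\<bar>X\<bar> \<le> 1" "0 \<le> Y" "Y \<le> 1"
  shows "(\<bar>R0x X Y\<bar> = 1 \<and> 0 \<le> R0y X Y \<and> R0y X Y \<le> 1) \<or> (R0y X Y = 1 \<and> \<bar>R0x X Y\<bar> \<le> 1)"
proof (cases "(Y+1)/2 \<le> \<bar>X\<bar>")
  case True
  then have M: "Mx X Y = \<bar>X\<bar>" unfolding Mx_def by auto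
  have pos: "\<bar>X\<bar> > 0" using True assms by (auto simp: field_simps)
  have "\<bar>R0x X Y\<bar> = 1" unfolding R0x_def M using pos by (simp add: abs_divide)
  moreover have "0 \<le> R0y X Y" unfolding R0y_def M using pos assms by (simp add: field_simps)
  moreover have "R0y X Y \<le> 1" unfolding R0y_def M using pos assms True by (simp add: field_simps)
  ultimately show ?thesis by auto
next
  case False
  then have M: "Mx X Y = (Y+1)/2" unfolding Mx_def by auto
  have pos: "(Y+1)/2 > 0" using assms by (simp add: field_simps)
  have "R0y X Y = 1" unfolding R0y_def M using pos by (simp add: field_simps)
  moreover have "\<bar>R0x X Y\<bar> \<le> 1" unfolding R0x_def M using pos False by (simp add: abs_divide field_simps)
  ultimately show ?thesis by auto
qed

lemma Mx_pos: "0 \<le> Y \<Longrightarrow> Mx X Y > 0" unfolding Mx_def by (auto simp: less_max_iff_disj field_simps)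



lemma inv_mono: "1 \<le> a \<Longrightarrow> a \<le> b \<Longrightarrow> 1/real b \<le> 1/real (a::nat)"
  by (intro divide_left_mono) auto

lemma inv_smono: "1 \<le> a \<Longrightarrow> a < b \<Longrightarrow> 1/real b < 1/real (a::nat)"
  by (intro divide_strict_left_mono) auto

lemma hk01: "0 \<le> hk k" "hk k \<le> 1" unfolding hk_def by auto

lemma UU_props:
  assumes "k \<ge> 1" "(x,y) \<in> UU k"
  shows "1/real (k+1) \<le> x \<and> x \<le> 1/real k \<and> 0 \<le> y \<and> y \<le> 1 \<and> (x = 1/real k \<or> x = 1/real (k+1) \<or> y = hk k)"
proof -
  have "1/real (k+1) \<le> 1/real k" using assms by (intro inv_mono) auto
  then show ?thesis using assms hk01[of k] unfolding UU_def by auto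
qed

lemma E_cases: "(x,y) \<in> E_set \<Longrightarrow> (x = 0 \<and> 0 \<le> y \<and> y \<le> 1) \<or> (\<exists>k\<ge>1. (x,y) \<in> UU k)"
  unfolding E_eq by auto

lemma UU_E: "k \<ge> 1 \<Longrightarrow> UU k \<subseteq> E_set"
  unfolding E_eq by auto

lemma E_sq: "E_set \<subseteq> {0..1} \<times> {0..1}"
proof
  fix p assume p: "p \<in> E_set"
  obtain x y where xy: "p = (x,y)" by (cases p)
  from E_cases[of x y] p xy consider "x = 0 \<and> 0 \<le> y \<and> y \<le> 1" | k where "k\<ge>1" "(x,y) \<in> UU k" by auto
  then show "p \<in> {0..1} \<times> {0..1}"
  proof cases
    case 1 then show ?thesis using xy by auto
  next
    case (2 k)
    note P = UU_props[OF 2]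
    have p1: "1/real (k+1) \<le> x" using P by blast
    have "0 \<le> 1/real (k+1)" by simp
    then have x0: "0 \<le> x" using p1 by linarith
    have p2: "x \<le> 1/real k" using P by blast
    have "1/real k \<le> 1" using 2 by auto
    then have x1: "x \<le> 1" using p2 by linarith
    show ?thesis using P xy x0 x1 by auto
  qed
qed

lemma cell_overlap:
  assumes "j \<ge> 1" "k \<ge> 1" "j \<noteq> k" "1/real (j+1) \<le> x" "x \<le> 1/real j"
    "1/real (k+1) \<le> x" "x \<le> 1/real k"
  shows "x = 1/real k \<or> x = 1/real (k+1)"
proof (cases "j < k")
  case True
  then have "1/real k \<le> 1/real (j+1)" by (intro inv_mono) auto
  then show ?thesis using assms by auto
next
  case False
  then have "k < j" using assms by auto
  then have "1/real j \<le> 1/real (k+1)" using assms by (intro inv_mono) auto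
  then show ?thesis using assms by auto
qed

lemma E_cell:
  assumes "k \<ge> 1" "(x,y) \<in> E_set" "1/real (k+1) \<le> x" "x \<le> 1/real k"
  shows "x = 1/real k \<or> x = 1/real (k+1) \<or> y = hk k"
proof -
  have "x > 0" using assms(3) by (smt (verit) of_nat_0_less_iff zero_less_Suc zero_less_divide_1_iff Suc_eq_plus1)
  then obtain j where j: "j \<ge> 1" "(x,y) \<in> UU j" using E_cases[OF assms(2)] by auto
  note P = UU_props[OF j]
  show ?thesis
  proof (cases "j = k")
    case True then show ?thesis using P by auto
  next
    case False
    have p1: "1/real (j+1) \<le> x" using P by blast
    have p2: "x \<le> 1/real j" using P by blast
    show ?thesis using cell_overlap[OF j(1) assms(1) False p1 p2 assms(3) assms(4)] by blast
  qed
qed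

lemma E_mid:
  assumes "k \<ge> 1" "(x,y) \<in> E_set" "1/real (k+1) < x" "x < 1/real k"
  shows "y = hk k"
  using E_cell[of k x y] assms by auto

definition mid :: "nat \<Rightarrow> real" where "mid k = (1/real k + 1/real (k+1))/2"

lemma mid_in: "k \<ge> 1 \<Longrightarrow> 1/real (k+1) < mid k \<and> mid k < 1/real k"
proof -
  assume "k \<ge> 1"
  then have "1/real (k+1) < 1/real k" by (intro inv_smono) auto
  then show ?thesis unfolding mid_def by auto
qed

lemma cell_of:
  assumes "0 < x" "x \<le> 1"
  shows "\<exists>k\<ge>1. 1/real (k+1) < x \<and> x \<le> 1/real k \<and> nat \<lfloor>1/x\<rfloor> = k"
proof -
  define t where "t = 1/x"
  have t1: "t \<ge> 1" using assms unfolding t_def by (simp add: field_simps)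
  define k where "k = nat \<lfloor>t\<rfloor>"
  have fl: "\<lfloor>t\<rfloor> \<ge> 1" using t1 by (simp add: le_floor_iff)
  have rk: "real k = of_int \<lfloor>t\<rfloor>" unfolding k_def using fl by simp
  have k1: "k \<ge> 1" unfolding k_def using fl by (subst le_nat_iff) auto
  have a: "real k \<le> t" using rk by simp
  have b: "t < real k + 1" using rk by simp
  have "x = 1/t" unfolding t_def using assms by simp
  moreover have "1/t \<le> 1/real k" using a k1 by (intro divide_left_mono) auto
  moreover have "1/real (k+1) < 1/t" using b t1 by (intro divide_strict_left_mono) auto
  ultimately show ?thesis using k1 unfolding k_def t_def by auto
qed

lemma UU_closed: "closed (UU k)"
  unfolding UU_def by (intro closed_Un closed_Times) auto

lemma E_closed: "closed E_set"
proof -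
  have "open (- E_set)"
  proof (rule openI)
    fix z assume zE: "z \<in> - E_set"
    obtain a b where z: "z = (a,b)" by (cases z)
    show "\<exists>e>0. ball z e \<subseteq> - E_set"
    proof (cases "a \<le> 0")
      case True
      define S where "S = {0::real..} \<times> {0::real..1}"
      have ES: "E_set \<subseteq> S" using E_sq unfolding S_def by auto
      have zS: "z \<notin> S"
      proof
        assume "z \<in> S"
        then have "a = 0" "0 \<le> b" "b \<le> 1" using True z unfolding S_def by auto
        then have "z \<in> E_set" unfolding E_eq z by auto
        then show False using zE by auto
      qed
      have "closed S" unfolding S_def by (intro closed_Times) auto
      then obtain e where "e > 0" "ball z e \<subseteq> - S" using zS open_contains_ball[of "- S"]
        by (auto simp: closed_def)
      then show ?thesis using ES by auto
    next
      case False
      then have a0: "a > 0" by auto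
      obtain N :: nat where N: "2/a < real N" using reals_Archimedean2 by blast
      have "0 < 2/a" using a0 by simp
      then have "0 < real N" using N by linarith
      then have N1: "N \<ge> 1" by simp
      have Na: "1/real N < a/2" using N a0 N1 by (simp add: field_simps)
      define C where "C = (\<Union>k\<in>{1..<N}. UU k)"
      have Cc: "closed C" unfolding C_def using UU_closed by (intro closed_UN) auto
      have CE: "C \<subseteq> E_set" unfolding C_def by (intro UN_least UU_E) auto
      have sub: "E_set \<subseteq> {p. fst p \<le> a/2} \<union> C"
      proof
        fix p assume p: "p \<in> E_set"
        obtain x y where xy: "p = (x,y)" by (cases p)
        from E_cases[of x y] p xy consider "x = 0" | k where "k\<ge>1" "(x,y) \<in> UU k" by auto
        then show "p \<in> {p. fst p \<le> a/2} \<union> C"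
        proof cases
          case 1 then show ?thesis using xy a0 by auto
        next
          case (2 k)
          show ?thesis
          proof (cases "k < N")
            case True then show ?thesis using 2 xy unfolding C_def by auto
          next
            case False
            then have "1/real k \<le> 1/real N" using N1 by (intro inv_mono) auto
            then show ?thesis using UU_props[OF 2] xy Na by auto
          qed
        qed
      qed
      have zC: "z \<notin> C" using zE CE by auto
      obtain e where e: "e > 0" "ball z e \<subseteq> - C" using zC Cc open_contains_ball[of "- C"]
        by (auto simp: closed_def)
      show ?thesis
      proof (intro exI conjI)
        show "min e (a/2) > 0" using e a0 by auto
        show "ball z (min e (a/2)) \<subseteq> - E_set"
        proof
          fix w assume w: "w \<in> ball z (min e (a/2))"
          then have "w \<notin> C" using e by auto
          moreover have "fst w > a/2"
          proof -
            have "dist (fst z) (fst w) < a/2" using w dist_fst_le[of z w] by auto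
            then have "\<bar>a - fst w\<bar> < a/2" using z by (simp add: dist_real_def)
            then have "a - fst w < a/2" using abs_ge_self[of "a - fst w"] by linarith
            then show ?thesis using z by simp
          qed
          ultimately show "w \<in> - E_set" using sub by auto
        qed
      qed
    qed
  qed
  then show ?thesis by (simp add: closed_def)
qed

lemma UU_conn: assumes "k \<ge> 1" shows "connected (UU k)"
proof -
  define A where "A = {1/real k} \<times> {0::real..1}"
  define B where "B = {1/real (k+1) .. 1/real k} \<times> {hk k}"
  define C where "C = {1/real (k+1)} \<times> {0::real..1}"
  have cA: "connected A" unfolding A_def by (intro convex_connected convex_Times) auto
  have cB: "connected B" unfolding B_def by (intro convex_connected convex_Times) auto
  have cC: "connected C" unfolding C_def by (intro convex_connected convex_Times) auto
  have le: "1/real (k+1) \<le> 1/real k" using assms by (intro inv_mono) auto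
  have "(1/real k, hk k) \<in> A \<inter> B" unfolding A_def B_def using le hk01[of k] by auto
  then have "A \<inter> B \<noteq> {}" by blast
  then have cAB: "connected (A \<union> B)" using connected_Un[OF cA cB] by blast
  have "(1/real (k+1), hk k) \<in> (A \<union> B) \<inter> C" unfolding C_def B_def using le hk01[of k] by auto
  then have "(A \<union> B) \<inter> C \<noteq> {}" by blast
  then have "connected (A \<union> B \<union> C)" using connected_Un[OF cAB cC] by blast
  then show ?thesis unfolding UU_def A_def B_def C_def .
qed

lemma Z_conn: "connected (\<Union>k\<in>{1..}. UU k)"
proof -
  define A where "A n = (\<Union>k\<in>{1..Suc n}. UU k)" for n
  have cA: "connected (A n)" for n
  proof (induction n)
    case 0 then show ?case unfolding A_def using UU_conn[of 1] by simp
  next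
    case (Suc n)
    have eq: "A (Suc n) = A n \<union> UU (Suc (Suc n))" unfolding A_def by (subst atLeastAtMostSuc_conv) auto
    have "(1/real (Suc (Suc n)), 0) \<in> UU (Suc n)" unfolding UU_def by auto
    moreover have "(1/real (Suc (Suc n)), 0) \<in> UU (Suc (Suc n))" unfolding UU_def by auto
    ultimately have "(1/real (Suc (Suc n)), 0) \<in> A n \<inter> UU (Suc (Suc n))" unfolding A_def by auto
    then show ?case unfolding eq using Suc UU_conn[of "Suc (Suc n)"] by (intro connected_Un) auto
  qed
  have "(1,0) \<in> UU 1" unfolding UU_def by auto
  then have "(1,0) \<in> \<Inter>(range A)" unfolding A_def by auto
  then have "connected (\<Union>(range A))" using cA by (intro connected_Union) auto
  moreover have "\<Union>(range A) = (\<Union>k\<in>{1..}. UU k)"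
  proof
    show "\<Union>(range A) \<subseteq> (\<Union>k\<in>{1..}. UU k)" unfolding A_def by auto
    show "(\<Union>k\<in>{1..}. UU k) \<subseteq> \<Union>(range A)"
    proof
      fix p assume "p \<in> (\<Union>k\<in>{1..}. UU k)"
      then obtain k where k: "k \<ge> 1" "p \<in> UU k" by auto
      then have "k \<in> {1..Suc (k-1)}" by auto
      then have "p \<in> A (k-1)" unfolding A_def using k by blast
      then show "p \<in> \<Union>(range A)" by blast
    qed
  qed
  ultimately show ?thesis by simp
qed

lemma E_conn: "connected E_set"
proof -
  let ?Z = "\<Union>k\<in>{1..}. UU k"
  have K: "{0} \<times> {0..1} \<subseteq> closure ?Z"
  proof
    fix p assume "p \<in> ({0::real} \<times> {0::real..1})"
    then obtain y where p: "p = (0,y)" "0 \<le> y" "y \<le> 1" by auto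
    have L: "(\<lambda>n. (inverse (real (Suc n)), y)) \<longlonglongrightarrow> (0,y)"
      by (intro tendsto_Pair LIMSEQ_inverse_real_of_nat tendsto_const)
    have M: "\<forall>n. (inverse (real (Suc n)), y) \<in> ?Z"
    proof
      fix n
      have "(inverse (real (Suc n)), y) \<in> UU (Suc n)" unfolding UU_def using p by (simp add: inverse_eq_divide)
      moreover have "Suc n \<in> {1..}" by simp
      ultimately show "(inverse (real (Suc n)), y) \<in> ?Z" by (rule UN_I[rotated])
    qed
    have "\<exists>x. (\<forall>n. x n \<in> ?Z) \<and> (x \<longlongrightarrow> (0,y)) sequentially"
      using L M by (intro exI[of _ "\<lambda>n. (inverse (real (Suc n)), y)"] conjI)
    then show "p \<in> closure ?Z" unfolding p(1) closure_sequential .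
  qed
  have sZ: "?Z \<subseteq> E_set" unfolding E_eq by (rule Un_upper2)
  have "?Z \<subseteq> closure ?Z" by (rule closure_subset)
  then have "E_set \<subseteq> closure ?Z" unfolding E_eq using K by (rule Un_least[rotated])
  then show ?thesis by (rule connected_intermediate_closure[OF Z_conn sZ])
qed



lemma odd_hk: "odd k \<Longrightarrow> hk k = 1" unfolding hk_def by simp
lemma even_hk: "even k \<Longrightarrow> hk k = 0" unfolding hk_def by simp

lemma E_mid':
  assumes "k \<ge> 1" "p \<in> E_set" "fst p = mid k"
  shows "snd p = hk k"
proof -
  have pE: "(fst p, snd p) \<in> E_set" using assms(2) by simp
  have l: "1/real (k+1) < fst p" "fst p < 1/real k" using mid_in[OF assms(1)] assms(3) by auto
  show ?thesis by (rule E_mid[OF assms(1) pE l])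
qed

lemma no_path:
  assumes pg: "path g" and sub: "path_image g \<subseteq> E_set"
    and st: "pathstart g = (0,0)" and fi: "pathfinish g = (1,1)"
  shows False
proof -
  have cg: "continuous_on {0..1} g" using pg unfolding path_def .
  have gE: "g t \<in> E_set" if "t \<in> {0..1}" for t using sub that unfolding path_image_def by auto
  have cf: "continuous_on {0..1} (\<lambda>t. fst (g t))" using cg by (intro continuous_intros)
  define T where "T = {t \<in> {0..1::real}. fst (g t) = 0}"
  have "closed T" unfolding T_def by (rule continuous_closed_preimage_constant[OF cf]) auto
  moreover have "bounded T" by (rule bounded_subset[of "{0..1}"]) (auto simp: T_def)
  ultimately have "compact T" by (simp add: compact_eq_bounded_closed)
  moreover have "0 \<in> T" using st unfolding T_def pathstart_def by auto
  ultimately obtain t0 where t0: "t0 \<in> T" "\<And>t. t \<in> T \<Longrightarrow> t \<le> t0"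
    using compact_attains_sup[of T] by blast
  have t01: "0 \<le> t0" "t0 \<le> 1" using t0 unfolding T_def by auto
  have "t0 \<noteq> 1" using t0(1) fi unfolding T_def pathfinish_def by auto
  then have t0l: "t0 < 1" using t01 by auto
  have pos: "fst (g t) > 0" if "t0 < t" "t \<le> 1" for t
  proof -
    have tt: "t \<in> {0..1}" using that t01 by auto
    have "fst (g t) \<ge> 0" using gE[OF tt] E_sq by (auto simp: mem_Times_iff)
    moreover have "fst (g t) \<noteq> 0"
    proof
      assume "fst (g t) = 0"
      then have "t \<in> T" unfolding T_def using tt by auto
      then show False using t0(2)[of t] that by auto
    qed
    ultimately show ?thesis by auto
  qed
  obtain d where d: "d > 0" "\<And>t. t \<in> {0..1} \<Longrightarrow> dist t t0 < d \<Longrightarrow> dist (g t) (g t0) < 1/3"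
    using cg t01 unfolding continuous_on_iff
    by (metis atLeastAtMost_iff divide_pos_pos zero_less_numeral zero_less_one)
  define t1 where "t1 = min 1 (t0 + d/2)"
  have t1: "t0 < t1" "t1 \<le> 1" using d t0l unfolding t1_def by auto
  define a where "a = fst (g t1)"
  have a0: "a > 0" unfolding a_def using pos t1 by auto
  have near: "dist (snd (g s)) (snd (g t0)) < 1/3" if "t0 \<le> s" "s \<le> t1" for s
  proof -
    have "s \<in> {0..1}" using that t01 t1 by auto
    moreover have "dist s t0 < d" using that d unfolding t1_def dist_real_def by auto
    ultimately have "dist (g s) (g t0) < 1/3" by (rule d(2))
    then show ?thesis using dist_snd_le[of "g s" "g t0"] by linarith
  qed
  have hit: "\<exists>s. t0 \<le> s \<and> s \<le> t1 \<and> fst (g s) = v" if "0 \<le> v" "v \<le> a" for v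
  proof -
    have "continuous_on {t0..t1} (\<lambda>t. fst (g t))" by (rule continuous_on_subset[OF cf]) (use t01 t1 in auto)
    moreover have "fst (g t0) \<le> v" using t0(1) that unfolding T_def by auto
    ultimately show ?thesis using IVT'[of "\<lambda>t. fst (g t)" t0 v t1] that t1 unfolding a_def by auto
  qed
  obtain N :: nat where N: "1/a < real N" using reals_Archimedean2 by blast
  define k where "k = 2*N+1"
  have k1: "k \<ge> 1" and ko: "odd k" and ke: "even (k+1)" unfolding k_def by auto
  have "0 < 1/a" using a0 by simp
  then have "1/a < real k" using N unfolding k_def by auto
  moreover have "real k > 0" using k1 by simp
  ultimately have ka: "1/real k < a" using a0 by (simp add: field_simps)
  have m1: "0 \<le> mid k" "mid k \<le> a" using mid_in[OF k1] ka
    by (smt (verit) divide_nonneg_nonneg of_nat_0_le_iff)+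
  have "1/real (k+1) \<le> 1/real k" using k1 by (intro inv_mono) auto
  then have m2: "0 \<le> mid (k+1)" "mid (k+1) \<le> a" using mid_in[of "k+1"] ka
    by (smt (verit) divide_nonneg_nonneg of_nat_0_le_iff le_add2)+
  obtain s1 where s1: "t0 \<le> s1" "s1 \<le> t1" "fst (g s1) = mid k" using hit[OF m1] by blast
  obtain s0 where s0: "t0 \<le> s0" "s0 \<le> t1" "fst (g s0) = mid (k+1)" using hit[OF m2] by blast
  have "g s1 \<in> E_set" using s1 t01 t1 by (intro gE) auto
  then have y1: "snd (g s1) = 1" using E_mid'[OF k1 _ s1(3)] odd_hk[OF ko] by simp
  have "g s0 \<in> E_set" using s0 t01 t1 by (intro gE) auto
  then have y0: "snd (g s0) = 0" using E_mid'[of "k+1" _, OF _ _ s0(3)] even_hk[OF ke] by simp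
  have A: "\<bar>1 - snd (g t0)\<bar> < 1/3" using near[OF s1(1,2)] y1 by (simp add: dist_real_def)
  have B: "\<bar>0 - snd (g t0)\<bar> < 1/3" using near[OF s0(1,2)] y0 by (simp add: dist_real_def)
  have "1 - snd (g t0) < 1/3" using A abs_ge_self[of "1 - snd (g t0)"] by linarith
  moreover have "snd (g t0) < 1/3" using B abs_ge_minus_self[of "0 - snd (g t0)"] by linarith
  ultimately show False by linarith
qed

lemma E_not_arc: "\<not> arcwise_connected E_set"
proof
  assume "arcwise_connected E_set"
  moreover have "(0,0) \<in> E_set" unfolding E_eq by auto
  moreover have "(1,1) \<in> E_set"
  proof -
    have "(1,1) \<in> UU 1" unfolding UU_def by auto
    then show ?thesis using UU_E[of 1] by auto
  qed
  ultimately obtain g where "arc g" "path_image g \<subseteq> E_set" "pathstart g = (0,0)" "pathfinish g = (1,1)"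
    unfolding arcwise_connected_def by (metis zero_neq_one prod.inject)
  then show False using no_path arc_imp_path by blast
qed

lemma E_not_lc: "\<not> locally_connected_space (subtopology euclidean E_set)"
proof
  assume LC: "locally_connected_space (subtopology euclidean E_set)"
  define p0 :: "real \<times> real" where "p0 = (0, 1/2)"
  define V where "V = E_set \<inter> ball p0 (1/3)"
  have p0E: "p0 \<in> E_set" unfolding E_eq p0_def by auto
  have oV: "openin (top_of_set E_set) V" unfolding V_def by auto
  have p0V: "p0 \<in> V" unfolding V_def using p0E by auto
  obtain U where U: "openin (top_of_set E_set) U" "p0 \<in> U" "U \<subseteq> V"
    "\<And>y. y \<in> U \<Longrightarrow> \<exists>C. connectedin (top_of_set E_set) C \<and> C \<subseteq> V \<and> p0 \<in> C \<and> y \<in> C"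
    using LC oV p0V unfolding locally_connected_space_im_kleinen by meson
  obtain e where e: "e > 0" "\<And>x'. x' \<in> E_set \<Longrightarrow> dist x' p0 < e \<Longrightarrow> x' \<in> U"
    using U(1,2) unfolding openin_euclidean_subtopology_iff by meson
  obtain m :: nat where m: "1/e < real m" using reals_Archimedean2 by blast
  have "0 < 1/e" using e by simp
  then have m0: "0 < real m" using m by linarith
  then have m1: "m \<ge> 1" by simp
  have me: "1/real m < e" using m e m0 \<open>0 < 1/e\<close> by (simp add: field_simps)
  define q where "q = (1/real m, 1/2::real)"
  have qE: "q \<in> E_set"
  proof -
    have "q \<in> UU m" unfolding UU_def q_def by auto
    then show ?thesis using UU_E[OF m1] by auto
  qed
  have "dist q p0 = 1/real m" unfolding q_def p0_def by (simp add: dist_Pair_Pair dist_real_def)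
  then have "q \<in> U" using e(2)[OF qE] me by simp
  then obtain C where C: "connectedin (top_of_set E_set) C" "C \<subseteq> V" "p0 \<in> C" "q \<in> C"
    using U(4) by blast
  have "connected C" using C(1) by (simp add: connectedin_subtopology)
  then have cf: "connected (fst ` C)" by (intro connected_continuous_image continuous_intros)
  have "0 \<in> fst ` C" using C(3) unfolding p0_def by force
  moreover have "1/real m \<in> fst ` C" using C(4) unfolding q_def by force
  moreover have "0 \<le> mid m" "mid m \<le> 1/real m" using mid_in[OF m1]
    by (smt (verit) divide_nonneg_nonneg of_nat_0_le_iff)+
  ultimately have "mid m \<in> fst ` C" using cf unfolding connected_iff_interval by blast
  then obtain c where c: "c \<in> C" "fst c = mid m" by auto
  have cV: "c \<in> E_set" "dist c p0 < 1/3" using c C(2) unfolding V_def by (auto simp: dist_commute)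
  have "snd c = hk m" using E_mid'[OF m1 cV(1) c(2)] .
  moreover have "dist (snd c) (snd p0) < 1/3" using cV(2) dist_snd_le[of c p0] by linarith
  ultimately have "\<bar>hk m - 1/2\<bar> < 1/3" unfolding p0_def by (simp add: dist_real_def)
  then show False unfolding hk_def by (auto split: if_splits)
qed



definition fl :: "real \<Rightarrow> real \<Rightarrow> real" where "fl h t = (1 - h) + (2*h - 1)*t"

lemma hk_cases: "hk k = 0 \<or> hk k = 1" unfolding hk_def by auto

lemma fl_inv: "h = 0 \<or> h = 1 \<Longrightarrow> fl h (fl h t) = t" by (auto simp: fl_def)
lemma fl_01: "h = 0 \<or> h = 1 \<Longrightarrow> 0 \<le> t \<Longrightarrow> t \<le> 1 \<Longrightarrow> 0 \<le> fl h t \<and> fl h t \<le> 1"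
  by (auto simp: fl_def)
lemma fl_hh: "h = 0 \<or> h = 1 \<Longrightarrow> fl h h = 1" by (auto simp: fl_def)
lemma fl_1: "fl h 1 = h" by (simp add: fl_def)

lemma cont_fl [continuous_intros]: "continuous_on S f \<Longrightarrow> continuous_on S (\<lambda>p. fl h (f p))"
  unfolding fl_def by (intro continuous_intros)

lemma cont_R0:
  assumes cX: "continuous_on S X" and cY: "continuous_on S Y" and Y0: "\<forall>p\<in>S. 0 \<le> Y p"
  shows "continuous_on S (\<lambda>p. R0x (X p) (Y p))" "continuous_on S (\<lambda>p. R0y (X p) (Y p))"
proof -
  have nz: "\<forall>p\<in>S. Mx (X p) (Y p) \<noteq> 0" using Y0 Mx_pos by (metis order_less_irrefl)
  have cM: "continuous_on S (\<lambda>p. Mx (X p) (Y p))" unfolding Mx_def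
    by (intro continuous_intros cX cY) auto
  show "continuous_on S (\<lambda>p. R0x (X p) (Y p))" unfolding R0x_def
    by (rule continuous_on_divide[OF cX cM nz])
  show "continuous_on S (\<lambda>p. R0y (X p) (Y p))" unfolding R0y_def
    by (rule continuous_on_diff[OF continuous_on_divide[OF continuous_on_add[OF cY continuous_on_const] cM nz] continuous_on_const])
qed

definition ca :: "nat \<Rightarrow> real" where "ca k = 1/real (k+1)"
definition cb :: "nat \<Rightarrow> real" where "cb k = 1/real k"
definition cm :: "nat \<Rightarrow> real" where "cm k = (ca k + cb k)/2"
definition cw :: "nat \<Rightarrow> real" where "cw k = (cb k - ca k)/2"

lemma cw_pos: "k \<ge> 1 \<Longrightarrow> cw k > 0"
  unfolding cw_def ca_def cb_def using inv_smono[of k "k+1"] by auto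
lemma cmw: "cm k + cw k = cb k" "cm k - cw k = ca k" unfolding cm_def cw_def by (simp_all add: field_simps)

definition cell :: "nat \<Rightarrow> (real \<times> real) set" where "cell k = {ca k .. cb k} \<times> {0..1}"

definition Gk :: "nat \<Rightarrow> real \<times> real \<Rightarrow> real \<times> real" where
  "Gk k p = (cm k + cw k * R0x ((fst p - cm k)/cw k) (fl (hk k) (snd p)),
             fl (hk k) (R0y ((fst p - cm k)/cw k) (fl (hk k) (snd p))))"

lemma Gk_cont: assumes "k \<ge> 1" shows "continuous_on (cell k) (Gk k)"
proof -
  have w: "cw k \<noteq> 0" using cw_pos[OF assms] by auto
  have cX: "continuous_on (cell k) (\<lambda>p. (fst p - cm k)/cw k)" using w by (intro continuous_intros) auto
  have cY: "continuous_on (cell k) (\<lambda>p. fl (hk k) (snd p))" by (intro continuous_intros)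
  have Y0: "\<forall>p\<in>cell k. 0 \<le> fl (hk k) (snd p)" using fl_01[OF hk_cases] unfolding cell_def by auto
  note c = cont_R0[OF cX cY Y0]
  have "continuous_on (cell k) (\<lambda>p. (cm k + cw k * R0x ((fst p - cm k)/cw k) (fl (hk k) (snd p)),
             fl (hk k) (R0y ((fst p - cm k)/cw k) (fl (hk k) (snd p)))))"
    by (intro continuous_on_Pair continuous_on_add continuous_on_mult continuous_on_const cont_fl c)
  then show ?thesis unfolding Gk_def[abs_def] .
qed

lemma X_bound:
  assumes "k \<ge> 1" "ca k \<le> x" "x \<le> cb k"
  shows "\<bar>(x - cm k)/cw k\<bar> \<le> 1"
proof -
  have w: "cw k > 0" using cw_pos[OF assms(1)] .
  have "x - cm k \<le> cw k" using assms(3) cmw(1)[of k] by linarith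
  moreover have "cm k - x \<le> cw k" using assms(2) cmw(2)[of k] by linarith
  ultimately have "\<bar>x - cm k\<bar> \<le> cw k" by (simp add: abs_le_iff)
  then show ?thesis using w by (simp add: abs_divide)
qed

lemma Gk_fix:
  assumes k: "k \<ge> 1" and p: "p \<in> cell k" and side: "fst p = ca k \<or> fst p = cb k \<or> snd p = hk k"
  shows "Gk k p = p"
proof -
  obtain x y where xy: "p = (x,y)" by (cases p)
  have w: "cw k > 0" using cw_pos[OF k] .
  have r: "ca k \<le> x" "x \<le> cb k" "0 \<le> y" "y \<le> 1" using p xy unfolding cell_def by auto
  define X where "X = (x - cm k)/cw k"
  define Y where "Y = fl (hk k) y"
  have Xb: "\<bar>X\<bar> \<le> 1" unfolding X_def using X_bound[OF k r(1,2)] .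
  have Yb: "0 \<le> Y" "Y \<le> 1" unfolding Y_def using fl_01[OF hk_cases r(3,4)] by auto
  have "\<bar>X\<bar> = 1 \<or> Y = 1"
  proof -
    consider "x = ca k" | "x = cb k" | "y = hk k" using side xy by auto
    then show ?thesis
    proof cases
      case 1
      then have "X = -1" unfolding X_def using w cmw(2)[of k, symmetric] by (simp add: field_simps)
      then show ?thesis by auto
    next
      case 2
      then have "X = 1" unfolding X_def using w cmw(1)[of k, symmetric] by (simp add: field_simps)
      then show ?thesis by auto
    next
      case 3
      then show ?thesis unfolding Y_def using fl_hh[OF hk_cases] by auto
    qed
  qed
  note id = R0_id[OF this Xb Yb]
  have "Gk k p = (cm k + cw k * R0x X Y, fl (hk k) (R0y X Y))" unfolding Gk_def xy X_def Y_def by simp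
  also have "\<dots> = (cm k + cw k * X, fl (hk k) Y)" unfolding id ..
  also have "\<dots> = (x, y)" unfolding X_def Y_def using w fl_inv[OF hk_cases] by simp
  finally show ?thesis using xy by simp
qed

lemma UU_alt: "UU k = ({cb k} \<times> {0..1}) \<union> ({ca k .. cb k} \<times> {hk k}) \<union> ({ca k} \<times> {0..1})"
  unfolding UU_def ca_def cb_def ..

lemma Gk_in:
  assumes k: "k \<ge> 1" and p: "p \<in> cell k"
  shows "Gk k p \<in> UU k"
proof -
  obtain x y where xy: "p = (x,y)" by (cases p)
  have w: "cw k > 0" using cw_pos[OF k] .
  have r: "ca k \<le> x" "x \<le> cb k" "0 \<le> y" "y \<le> 1" using p xy unfolding cell_def by auto
  define X where "X = (x - cm k)/cw k"
  define Y where "Y = fl (hk k) y"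
  have Xb: "\<bar>X\<bar> \<le> 1" unfolding X_def using X_bound[OF k r(1,2)] .
  have Yb: "0 \<le> Y" "Y \<le> 1" unfolding Y_def using fl_01[OF hk_cases r(3,4)] by auto
  have G: "Gk k p = (cm k + cw k * R0x X Y, fl (hk k) (R0y X Y))"
    unfolding Gk_def xy X_def Y_def by simp
  from R0_img[OF Xb Yb] show ?thesis
  proof
    assume a: "\<bar>R0x X Y\<bar> = 1 \<and> 0 \<le> R0y X Y \<and> R0y X Y \<le> 1"
    have y': "0 \<le> fl (hk k) (R0y X Y) \<and> fl (hk k) (R0y X Y) \<le> 1" using fl_01[OF hk_cases] a by auto
    have "R0x X Y = 1 \<or> R0x X Y = -1" using a by auto
    then have "cm k + cw k * R0x X Y = cb k \<or> cm k + cw k * R0x X Y = ca k" using cmw[of k] by auto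
    then show ?thesis unfolding G UU_alt using y' by auto
  next
    assume a: "R0y X Y = 1 \<and> \<bar>R0x X Y\<bar> \<le> 1"
    have "- 1 \<le> R0x X Y" "R0x X Y \<le> 1" using a by auto
    then have "cw k * (- 1) \<le> cw k * R0x X Y" "cw k * R0x X Y \<le> cw k * 1" using w
      by (intro mult_left_mono; simp)+
    then have "ca k \<le> cm k + cw k * R0x X Y" "cm k + cw k * R0x X Y \<le> cb k" using cmw[of k] by auto
    then show ?thesis unfolding G UU_alt using a fl_1 by auto
  qed
qed

definition G :: "real \<times> real \<Rightarrow> real \<times> real" where "G p = Gk (nat \<lfloor>1 / fst p\<rfloor>) p"

lemma G_eq:
  assumes k: "k \<ge> 1" and p: "p \<in> cell k"
  shows "G p = Gk k p"
proof -
  have r: "ca k \<le> fst p" "fst p \<le> cb k" using p unfolding cell_def by auto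
  have x0: "fst p > 0" using r(1) unfolding ca_def by (smt (verit) divide_pos_pos of_nat_0_less_iff zero_less_Suc Suc_eq_plus1)
  define t where "t = 1 / fst p"
  have kpos: "real k > 0" using k by simp
  have t1: "real k \<le> t" unfolding t_def using r(2) x0 kpos unfolding cb_def by (simp add: field_simps)
  have t2: "t \<le> real k + 1" unfolding t_def using r(1) x0 unfolding ca_def by (simp add: field_simps)
  show ?thesis
  proof (cases "t < real k + 1")
    case True
    have "\<lfloor>t\<rfloor> = int k" using t1 True by (simp add: floor_eq_iff)
    then show ?thesis unfolding G_def t_def[symmetric] by simp
  next
    case False
    then have tk: "t = real (k+1)" using t2 by simp
    then have "nat \<lfloor>t\<rfloor> = k+1" by (metis floor_of_nat nat_int)
    then have e1: "G p = Gk (k+1) p" unfolding G_def t_def[symmetric] by simp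
    have fp: "fst p = 1/real (k+1)" using tk x0 unfolding t_def by (simp add: field_simps)
    have le2: "1/(2 + real k) \<le> 1/(1 + real k)" by (intro divide_left_mono) auto
    have c: "p \<in> cell (k+1)" "fst p = cb (k+1)" using p fp le2 unfolding cell_def cb_def ca_def
      by (auto simp: mem_Times_iff)
    have e2: "Gk (k+1) p = p" using Gk_fix[of "k+1" p] c by auto
    have e3: "Gk k p = p" using Gk_fix[OF k p] fp unfolding ca_def by auto
    show ?thesis using e1 e2 e3 by simp
  qed
qed

lemma cell_closed: "closed (cell k)" unfolding cell_def by (intro closed_Times) auto

definition gn :: "nat \<Rightarrow> real \<times> real \<Rightarrow> real \<times> real" where
  "gn n p = G (max (fst p) (1/real (Suc n)), snd p)"

lemma cell_ofp:
  assumes "0 < x" "x \<le> 1" "0 \<le> y" "y \<le> 1"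
  obtains k where "k \<ge> 1" "(x,y) \<in> cell k" "1/real (k+1) < x"
proof -
  obtain k where "k \<ge> 1" "1/real (k+1) < x" "x \<le> 1/real k" using cell_of[OF assms(1,2)] by blast
  then show ?thesis using that assms unfolding cell_def ca_def cb_def by auto
qed

lemma gn_cont_img:
  shows "continuous_on ({0..1} \<times> {0..1}) (gn n) \<and> gn n ` ({0..1} \<times> {0..1}) \<subseteq> E_set"
proof -
  define W where "W = (\<Union>k\<in>{1..Suc n}. cell k)"
  have cW: "continuous_on W G" unfolding W_def
  proof (rule continuous_on_closed_Union)
    show "finite {1..Suc n}" by simp
    fix k assume "k \<in> {1..Suc n}"
    then have k: "k \<ge> 1" by auto
    show "closed (cell k)" by (rule cell_closed)
    show "continuous_on (cell k) G" using Gk_cont[OF k] by (rule continuous_on_cong[THEN iffD1, rotated 2]) (auto simp: G_eq[OF k])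
  qed
  have inW: "(max (fst p) (1/real (Suc n)), snd p) \<in> W \<and> G (max (fst p) (1/real (Suc n)), snd p) \<in> E_set"
    if p: "p \<in> {0..1} \<times> {0..1}" for p
  proof -
    define x' where "x' = max (fst p) (1/real (Suc n))"
    have x'0: "0 < x'" unfolding x'_def by (simp add: less_max_iff_disj)
    have x'1: "x' \<le> 1" using p unfolding x'_def by auto
    have y: "0 \<le> snd p" "snd p \<le> 1" using p by auto
    obtain k where k: "k \<ge> 1" "(x', snd p) \<in> cell k" "1/real (k+1) < x'" using cell_ofp[OF x'0 x'1 y] by blast
    have "k \<le> Suc n"
    proof (rule ccontr)
      assume "\<not> k \<le> Suc n"
      then have "1/real k < 1/real (Suc n)" by (intro inv_smono) auto
      moreover have "x' \<le> 1/real k" using k(2) unfolding cell_def cb_def by auto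
      moreover have "1/real (Suc n) \<le> x'" unfolding x'_def by auto
      ultimately show False by linarith
    qed
    then have "(x', snd p) \<in> W" unfolding W_def using k by auto
    moreover have "G (x', snd p) \<in> E_set" using G_eq[OF k(1,2)] Gk_in[OF k(1,2)] UU_E[OF k(1)] by auto
    ultimately show ?thesis unfolding x'_def by simp
  qed
  have sub: "(\<lambda>p. (max (fst p) (1/real (Suc n)), snd p)) ` ({0..1} \<times> {0..1}) \<subseteq> W"
    using inW by blast
  have cI: "continuous_on ({0..1} \<times> {0..1}) (\<lambda>p::real\<times>real. (max (fst p) (1/real (Suc n)), snd p))"
    by (intro continuous_intros)
  have "continuous_on ({0..1} \<times> {0..1}) (\<lambda>p. G (max (fst p) (1/real (Suc n)), snd p))"
    by (rule continuous_on_compose2[OF cW cI sub])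
  moreover have "gn n ` ({0..1} \<times> {0..1}) \<subseteq> E_set" unfolding gn_def using inW by blast
  ultimately show ?thesis unfolding gn_def[abs_def] by blast
qed

definition rr :: "real \<times> real \<Rightarrow> real \<times> real" where "rr p = (if fst p = 0 then p else G p)"

lemma rr_lim:
  assumes p: "p \<in> {0..1} \<times> {0..1}"
  shows "rr p \<in> E_set \<and> (\<lambda>n. gn n p) \<longlonglongrightarrow> rr p"
proof -
  obtain x y where xy: "p = (x,y)" by (cases p)
  have r: "0 \<le> x" "x \<le> 1" "0 \<le> y" "y \<le> 1" using p xy by auto
  show ?thesis
  proof (cases "x = 0")
    case True
    have rp: "rr p = (0,y)" unfolding rr_def xy True by simp
    have "(0,y) \<in> E_set" unfolding E_eq using r by auto
    moreover have "gn n p = (inverse (real (Suc n)), y)" for n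
    proof -
      have c: "(1/real (Suc n), y) \<in> cell (Suc n)" unfolding cell_def ca_def cb_def using r
        using inv_mono[of "Suc n" "Suc n + 1"] by auto
      have "gn n p = G (1/real (Suc n), y)" unfolding gn_def xy True by (simp add: max_def)
      also have "\<dots> = Gk (Suc n) (1/real (Suc n), y)" by (rule G_eq[OF _ c]) simp
      also have "\<dots> = (1/real (Suc n), y)" by (rule Gk_fix[OF _ c]) (simp_all add: cb_def)
      finally show ?thesis by (simp add: inverse_eq_divide)
    qed
    moreover have "(\<lambda>n. (inverse (real (Suc n)), y)) \<longlonglongrightarrow> (0,y)"
      by (intro tendsto_Pair LIMSEQ_inverse_real_of_nat tendsto_const)
    ultimately show ?thesis using rp by simp
  next
    case False
    then have x0: "x > 0" using r by auto
    obtain k where k: "k \<ge> 1" "(x,y) \<in> cell k" using cell_ofp[OF x0 r(2,3,4)] by blast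
    have rp: "rr p = G p" unfolding rr_def xy using False by simp
    have "G p \<in> E_set" using G_eq[OF k] Gk_in[OF k] UU_E[OF k(1)] xy by auto
    moreover have "\<forall>\<^sub>F n in sequentially. gn n p = G p"
    proof -
      obtain N :: nat where N: "1/x < real N" using reals_Archimedean2 by blast
      have "gn n p = G p" if "n \<ge> N" for n
      proof -
        have "1/x < real (Suc n)" using N that by linarith
        then have "1/real (Suc n) < x" using x0 by (simp add: field_simps)
        then show ?thesis unfolding gn_def xy by (simp add: max_def)
      qed
      then show ?thesis unfolding eventually_sequentially by blast
    qed
    then have "(\<lambda>n. gn n p) \<longlonglongrightarrow> G p" by (rule tendsto_eventually)
    ultimately show ?thesis using rp by simp
  qed
qed

lemma rr_fix: "p \<in> E_set \<Longrightarrow> rr p = p"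
proof -
  assume pE: "p \<in> E_set"
  obtain x y where xy: "p = (x,y)" by (cases p)
  show "rr p = p"
  proof (cases "x = 0")
    case True then show ?thesis unfolding rr_def xy by simp
  next
    case False
    have r: "0 \<le> x" "x \<le> 1" "0 \<le> y" "y \<le> 1" using pE E_sq xy by auto
    then have x0: "x > 0" using False by auto
    obtain k where k: "k \<ge> 1" "(x,y) \<in> cell k" using cell_ofp[OF x0 r(2,3,4)] by blast
    have "x = 1/real k \<or> x = 1/real (k+1) \<or> y = hk k"
      using E_cell[OF k(1)] pE xy k(2) unfolding cell_def ca_def cb_def by auto
    then have side: "fst (x,y) = ca k \<or> fst (x,y) = cb k \<or> snd (x,y) = hk k" unfolding ca_def cb_def by auto
    have "rr p = G (x,y)" unfolding rr_def xy using False by simp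
    also have "\<dots> = Gk k (x,y)" by (rule G_eq[OF k])
    also have "\<dots> = (x,y)" by (rule Gk_fix[OF k side])
    finally show ?thesis using xy by simp
  qed
qed

lemma E_B1: "B1_retract E_set (subtopology euclidean ({0..1} \<times> {0..1}))"
proof -
  have sq: "subtopology (top_of_set ({0..1} \<times> {0..1})) E_set = top_of_set E_set"
    unfolding subtopology_subtopology using E_sq by (simp add: Int_absorb1)
  show ?thesis
    unfolding B1_retract_def baire_one_map_def sq
  proof (intro conjI exI[of _ rr] exI[of _ gn] allI ballI)
    show "E_set \<subseteq> topspace (top_of_set ({0..1} \<times> {0..1}))" using E_sq by simp
    fix n show "continuous_map (top_of_set ({0..1} \<times> {0..1})) (top_of_set E_set) (gn n)"
      using gn_cont_img[of n] by auto
  next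
    fix p assume "p \<in> topspace (top_of_set ({0..1::real} \<times> {0..1::real}))"
    then have p: "p \<in> {0..1} \<times> {0..1}" by simp
    note L = rr_lim[OF p]
    have "\<forall>n. gn n p \<in> E_set"
    proof
      fix n show "gn n p \<in> E_set" using gn_cont_img[of n] p by (meson image_subset_iff)
    qed
    then have "\<forall>\<^sub>F n in sequentially. gn n p \<in> E_set" by (rule always_eventually)
    then show "limitin (top_of_set E_set) (\<lambda>n. gn n p) (rr p) sequentially"
      unfolding limitin_subtopology using L by simp
  next
    fix p assume "p \<in> E_set" then show "rr p = p" by (rule rr_fix)
  qed
qed


theorem mainTheorem8:
  shows "E_set \<subseteq> {0..1} \<times> {0..1} \<and> closed E_set \<and> connected E_set
    \<and> \<not> arcwise_connected E_set
    \<and> \<not> locally_connected_space (subtopology euclidean E_set)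
    \<and> B1_retract E_set (subtopology euclidean ({0..1} \<times> {0..1}))"
  using E_sq E_closed E_conn E_not_arc E_not_lc E_B1 by blast

end
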